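(* $\mathfrak{mc}((\mathsf{Borel}(2^\omega)/\mathsf{null})^-)=\mathfrak{mc}((\mathsf{Borel}(2^\omega)/\mathsf{meager})^-)=\mathfrak{c}$.
   Context: $\mathsf{null}$ and $\mathsf{meager}$ are the ideals of Lebesgue null and of meager subsets of $2^\omega$; $\mathsf{Borel}(2^\omega)/\mathcal{J}$ is the Boolean algebra of Borel subsets of $2^\omega$ modulo the ideal $\mathcal{J}$. For a Boolean algebra $B$, $B^-=B\setminus\{0,1\}$ ordered by the Boolean order. For a poset $P$, a chain is a set of pairwise comparable elements and $\mathfrak{mc}(P)$ is the minimal cardinality of a maximal (under inclusion) chain. $\mathfrak{c}=2^{\aleph_0}$. *)

theory Defs
  imports "HOL-Probability.Probability"
begin


text \<open>Cantor space 2^omega is modelled as the type nat => bool, with the product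
  topology of discrete two-point spaces.\<close>

definition cantor_top :: "(nat \<Rightarrow> bool) topology" where
  "cantor_top = product_topology (\<lambda>_. discrete_topology (UNIV :: bool set)) UNIV"

definition borel_cantor :: "(nat \<Rightarrow> bool) set set" where
  "borel_cantor = sigma_sets UNIV {U. openin cantor_top U}"

text \<open>Lebesgue (coin-flipping) measure on 2^omega.\<close>
definition cantor_measure :: "(nat \<Rightarrow> bool) measure" where
  "cantor_measure = (\<Pi>\<^sub>M i\<in>(UNIV :: nat set). measure_pmf (bernoulli_pmf (1/2)))"

definition null_ideal :: "(nat \<Rightarrow> bool) set set" where
  "null_ideal = {A. \<exists>B \<in> null_sets cantor_measure. A \<subseteq> B}"

definition nowhere_dense :: "(nat \<Rightarrow> bool) set \<Rightarrow> bool" where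
  "nowhere_dense A \<longleftrightarrow> cantor_top interior_of (cantor_top closure_of A) = {}"

definition meager_ideal :: "(nat \<Rightarrow> bool) set set" where
  "meager_ideal = {A. \<exists>F. countable F \<and> (\<forall>N\<in>F. nowhere_dense N) \<and> A \<subseteq> \<Union>F}"

definition quot_class :: "(nat \<Rightarrow> bool) set set \<Rightarrow> (nat \<Rightarrow> bool) set \<Rightarrow> (nat \<Rightarrow> bool) set set" where
  "quot_class J A = {B \<in> borel_cantor. (A - B) \<union> (B - A) \<in> J}"

definition quot_alg :: "(nat \<Rightarrow> bool) set set \<Rightarrow> (nat \<Rightarrow> bool) set set set" where
  "quot_alg J = quot_class J ` borel_cantor"

definition quot_le :: "(nat \<Rightarrow> bool) set set \<Rightarrow> (nat \<Rightarrow> bool) set set \<Rightarrow> (nat \<Rightarrow> bool) set set \<Rightarrow> bool" where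
  "quot_le J C D \<longleftrightarrow> (\<exists>A\<in>C. \<exists>B\<in>D. A - B \<in> J)"

text \<open>B^- = B minus {0,1}.\<close>
definition quot_minus :: "(nat \<Rightarrow> bool) set set \<Rightarrow> (nat \<Rightarrow> bool) set set set" where
  "quot_minus J = quot_alg J - {quot_class J {}, quot_class J UNIV}"

definition is_chain :: "'a set \<Rightarrow> ('a \<Rightarrow> 'a \<Rightarrow> bool) \<Rightarrow> 'a set \<Rightarrow> bool" where
  "is_chain P le C \<longleftrightarrow> C \<subseteq> P \<and> (\<forall>x\<in>C. \<forall>y\<in>C. le x y \<or> le y x)"

definition is_maximal_chain :: "'a set \<Rightarrow> ('a \<Rightarrow> 'a \<Rightarrow> bool) \<Rightarrow> 'a set \<Rightarrow> bool" where
  "is_maximal_chain P le C \<longleftrightarrow> is_chain P le C \<and> (\<forall>D. is_chain P le D \<and> C \<subseteq> D \<longrightarrow> D = C)"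

text \<open>mc(P) = |K|: the minimum of the cardinalities of maximal chains equals |K|.\<close>
definition mc_equals :: "'a set \<Rightarrow> ('a \<Rightarrow> 'a \<Rightarrow> bool) \<Rightarrow> 'b set \<Rightarrow> bool" where
  "mc_equals P le K \<longleftrightarrow>
     (\<exists>C. is_maximal_chain P le C \<and> (card_of C, card_of K) \<in> ordIso) \<and>
     (\<forall>C. is_maximal_chain P le C \<longrightarrow> (card_of K, card_of C) \<in> ordLeq)"

end

theory Submission
  imports Defs
begin


lemma borel_sa: "sigma_algebra UNIV borel_cantor"
  unfolding borel_cantor_def by (rule sigma_algebra_sigma_sets) auto

interpretation bsa: sigma_algebra UNIV borel_cantor by (rule borel_sa)

lemma borel_open: "openin cantor_top U \<Longrightarrow> U \<in> borel_cantor"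
  unfolding borel_cantor_def by (auto intro: sigma_sets.Basic)

lemma topspace_cantor[simp]: "topspace cantor_top = UNIV"
  unfolding cantor_top_def by (simp add: topspace_product_topology)

lemma open_coord: "openin cantor_top {x. x n}"
proof -
  have "continuous_map cantor_top (discrete_topology UNIV) (\<lambda>x. x n)"
    unfolding cantor_top_def by (rule continuous_map_product_projection) simp
  from openin_continuous_map_preimage[OF this, of "{True}"] show ?thesis by simp
qed

lemma borel_coord: "{x. x n} \<in> borel_cantor"
  by (rule borel_open[OF open_coord])


definition cyl :: "bool list \<Rightarrow> (nat \<Rightarrow> bool) set" where
  "cyl l = {y. \<forall>i<length l. y i = l ! i}"

lemma open_cyl_union:
  assumes U: "openin cantor_top U"
  shows "U = \<Union>(cyl ` {l. cyl l \<subseteq> U})"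
proof
  show "\<Union>(cyl ` {l. cyl l \<subseteq> U}) \<subseteq> U" by auto
  show "U \<subseteq> \<Union>(cyl ` {l. cyl l \<subseteq> U})"
  proof
    fix x assume x: "x \<in> U"
    from U x obtain V where V: "finite {i. V i \<noteq> UNIV}" "x \<in> Pi\<^sub>E UNIV V" "Pi\<^sub>E UNIV V \<subseteq> U"
      unfolding cantor_top_def openin_product_topology_alt by auto
    obtain N where N: "{i. V i \<noteq> UNIV} \<subseteq> {..<N}" using finite_nat_bounded[OF V(1)] by blast
    define l where "l = map x [0..<N]"
    have "x \<in> cyl l" unfolding cyl_def l_def by simp
    moreover have "cyl l \<subseteq> U"
    proof
      fix y assume y: "y \<in> cyl l"
      have "y \<in> Pi\<^sub>E UNIV V"
      proof (simp add: PiE_def Pi_def, intro allI)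
        fix i show "y i \<in> V i"
        proof (cases "i < N")
          case True
          then have "y i = x i" using y unfolding cyl_def l_def by auto
          then show ?thesis using V(2) by auto
        next
          case False then have "V i = UNIV" using N by auto
          then show ?thesis by simp
        qed
      qed
      then show "y \<in> U" using V(3) by blast
    qed
    ultimately show "x \<in> \<Union>(cyl ` {l. cyl l \<subseteq> U})" by blast
  qed
qed



locale qa =
  fixes J :: "(nat \<Rightarrow> bool) set set"
  assumes down: "A \<in> J \<Longrightarrow> B \<subseteq> A \<Longrightarrow> B \<in> J"
  and cunion: "countable F \<Longrightarrow> F \<subseteq> J \<Longrightarrow> \<Union>F \<in> J"
  and single: "{x} \<in> J"
  and univ: "UNIV \<notin> J"
  and supr: "S \<subseteq> borel_cantor \<Longrightarrow> \<exists>U\<in>borel_cantor. (\<forall>A\<in>S. A - U \<in> J) \<and>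
              (\<forall>B\<in>borel_cantor. (\<forall>A\<in>S. A - B \<in> J) \<longrightarrow> U - B \<in> J)"
  and code: "\<exists>h::(nat\<Rightarrow>bool) set \<Rightarrow> nat \<Rightarrow> bool. \<forall>A\<in>borel_cantor. \<forall>B\<in>borel_cantor.
              (A - B \<in> J \<or> B - A \<in> J) \<longrightarrow> h A = h B \<longrightarrow> A - B \<in> J \<and> B - A \<in> J"
begin

lemma empty[simp]: "{} \<in> J"
  using down single by blast

lemma Un2: "A \<in> J \<Longrightarrow> B \<in> J \<Longrightarrow> A \<union> B \<in> J"
  using cunion[of "{A,B}"] by auto

lemma Un3: "A \<in> J \<Longrightarrow> B \<in> J \<Longrightarrow> C \<in> J \<Longrightarrow> A \<union> B \<union> C \<in> J"
  using Un2 by blast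

lemma sub2: "X \<subseteq> A \<union> B \<Longrightarrow> A \<in> J \<Longrightarrow> B \<in> J \<Longrightarrow> X \<in> J"
  using Un2 down by blast

lemma trans: "A - B \<in> J \<Longrightarrow> B - C \<in> J \<Longrightarrow> A - C \<in> J"
  by (rule sub2[of _ "A - B" "B - C"]) auto

lemma cls_self: "A \<in> borel_cantor \<Longrightarrow> A \<in> quot_class J A"
  unfolding quot_class_def by auto

lemma cls_eq: "A \<in> borel_cantor \<Longrightarrow> B \<in> borel_cantor \<Longrightarrow>
   quot_class J A = quot_class J B \<longleftrightarrow> A - B \<in> J \<and> B - A \<in> J"
proof
  assume A: "A \<in> borel_cantor" and B: "B \<in> borel_cantor" and e: "quot_class J A = quot_class J B"
  then have "A \<in> quot_class J B" using cls_self by auto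
  then have "(B - A) \<union> (A - B) \<in> J" unfolding quot_class_def by auto
  then show "A - B \<in> J \<and> B - A \<in> J" using down by blast
next
  assume A: "A \<in> borel_cantor" and B: "B \<in> borel_cantor" and h: "A - B \<in> J \<and> B - A \<in> J"
  show "quot_class J A = quot_class J B"
    unfolding quot_class_def
  proof (intro Collect_cong conj_cong refl)
    fix X show "(A - X \<union> (X - A) \<in> J) = (B - X \<union> (X - B) \<in> J)"
    proof
      assume "A - X \<union> (X - A) \<in> J"
      then have 1: "A - X \<in> J" "X - A \<in> J" using down by blast+
      have "B - X \<in> J" by (rule sub2[of _ "B - A" "A - X"]) (use h 1 in auto)
      moreover have "X - B \<in> J" by (rule sub2[of _ "X - A" "A - B"]) (use h 1 in auto)
      ultimately show "B - X \<union> (X - B) \<in> J" by (rule Un2)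
    next
      assume "B - X \<union> (X - B) \<in> J"
      then have 1: "B - X \<in> J" "X - B \<in> J" using down by blast+
      have "A - X \<in> J" by (rule sub2[of _ "A - B" "B - X"]) (use h 1 in auto)
      moreover have "X - A \<in> J" by (rule sub2[of _ "X - B" "B - A"]) (use h 1 in auto)
      ultimately show "A - X \<union> (X - A) \<in> J" by (rule Un2)
    qed
  qed
qed

lemma le_cls: "A \<in> borel_cantor \<Longrightarrow> B \<in> borel_cantor \<Longrightarrow>
   quot_le J (quot_class J A) (quot_class J B) \<longleftrightarrow> A - B \<in> J"
proof
  assume A: "A \<in> borel_cantor" and B: "B \<in> borel_cantor"
  assume "quot_le J (quot_class J A) (quot_class J B)"
  then obtain A' B' where A': "A' \<in> quot_class J A" and B': "B' \<in> quot_class J B" and d: "A' - B' \<in> J"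
    unfolding quot_le_def by auto
  have "A - A' \<in> J" "B' - B \<in> J" using A' B' down unfolding quot_class_def by blast+
  then show "A - B \<in> J" using d trans[of A A' B'] trans[of A B' B] by blast
next
  assume A: "A \<in> borel_cantor" and B: "B \<in> borel_cantor" and "A - B \<in> J"
  then show "quot_le J (quot_class J A) (quot_class J B)"
    unfolding quot_le_def using cls_self by blast
qed

lemma in_minus: "A \<in> borel_cantor \<Longrightarrow> quot_class J A \<in> quot_minus J \<longleftrightarrow> A \<notin> J \<and> UNIV - A \<notin> J"
  unfolding quot_minus_def quot_alg_def using cls_eq[of A "{}"] cls_eq[of A UNIV] by auto

lemma minus_rep: "c \<in> quot_minus J \<Longrightarrow> \<exists>A\<in>borel_cantor. c = quot_class J A"
  unfolding quot_minus_def quot_alg_def by auto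

lemma atomless:
  assumes A: "A \<in> borel_cantor" "A \<notin> J"
  shows "\<exists>E\<in>borel_cantor. E \<subseteq> A \<and> E \<notin> J \<and> A - E \<notin> J"
proof (rule ccontr)
  assume nt: "\<not> ?thesis"
  have h: "\<And>n. A \<inter> {x. x n} \<in> J \<or> A - {x. x n} \<in> J"
  proof -
    fix n
    have "A \<inter> {x. x n} \<in> borel_cantor" using A borel_coord by auto
    moreover have "A - (A \<inter> {x. x n}) = A - {x. x n}" by auto
    ultimately show "A \<inter> {x. x n} \<in> J \<or> A - {x. x n} \<in> J" using nt by force
  qed
  define b where "b n = (A - {x. x n} \<in> J)" for n
  have hn: "A \<inter> {x. x n \<noteq> b n} \<in> J" for n
    using h[of n] unfolding b_def by (cases "A - {x. x n} \<in> J") (auto elim: down)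
  have "A \<subseteq> {b} \<union> (\<Union>n. A \<inter> {x. x n \<noteq> b n})" by auto
  moreover have "(\<Union>n. A \<inter> {x. x n \<noteq> b n}) \<in> J"
    using cunion[of "range (\<lambda>n. A \<inter> {x. x n \<noteq> b n})"] hn by auto
  ultimately show False using sub2 single A(2) by blast
qed

end

lemma maximal_chain_exists:
  "\<exists>C. is_maximal_chain P le C"
proof -
  let ?A = "{D. is_chain P le D}"
  have "\<forall>C\<in>chains ?A. \<Union>C \<in> ?A"
  proof
    fix C assume "C \<in> chains ?A"
    then have C: "C \<subseteq> ?A" "\<And>X Y. X \<in> C \<Longrightarrow> Y \<in> C \<Longrightarrow> X \<subseteq> Y \<or> Y \<subseteq> X"
      unfolding chains_def chain_subset_def by auto
    show "\<Union>C \<in> ?A" unfolding is_chain_def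
    proof safe
      fix x X assume "x \<in> X" "X \<in> C" then show "x \<in> P" using C unfolding is_chain_def by blast
    next
      fix x X y Y assume a: "x \<in> X" "X \<in> C" "y \<in> Y" "Y \<in> C" "\<not> le y x"
      from C(2)[OF a(2,4)] C(1) a show "le x y" unfolding is_chain_def by blast
    qed
  qed
  from Zorn_Lemma[OF this] obtain M where "M \<in> ?A" "\<forall>X\<in>?A. M \<subseteq> X \<longrightarrow> X = M" by blast
  then show ?thesis unfolding is_maximal_chain_def by blast
qed



locale mchain = qa +
  fixes C
  assumes maxc: "is_maximal_chain (quot_minus J) (quot_le J) C"
begin

definition Crep where "Crep = {A \<in> borel_cantor. quot_class J A \<in> C}"

abbreviation lt where "lt A B \<equiv> A - B \<in> J \<and> B - A \<notin> J"

lemma C_sub: "C \<subseteq> quot_minus J"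
  using maxc unfolding is_maximal_chain_def is_chain_def by blast

lemma Crep_borel: "A \<in> Crep \<Longrightarrow> A \<in> borel_cantor"
  unfolding Crep_def by auto

lemma Crep_cmp: "A \<in> Crep \<Longrightarrow> B \<in> Crep \<Longrightarrow> A - B \<in> J \<or> B - A \<in> J"
  using maxc le_cls unfolding is_maximal_chain_def is_chain_def Crep_def by blast

lemma Crep_minus: "A \<in> Crep \<Longrightarrow> A \<notin> J \<and> UNIV - A \<notin> J"
  using C_sub in_minus unfolding Crep_def by blast

lemma C_rep: "c \<in> C \<Longrightarrow> \<exists>A\<in>Crep. c = quot_class J A"
  using C_sub minus_rep unfolding Crep_def by blast

lemma maximal:
  assumes m: "m \<in> borel_cantor" "m \<notin> J" "UNIV - m \<notin> J"
    and cm: "\<forall>c\<in>Crep. m - c \<in> J \<or> c - m \<in> J"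
  shows "m \<in> Crep"
proof -
  let ?D = "insert (quot_class J m) C"
  have "is_chain (quot_minus J) (quot_le J) ?D"
    unfolding is_chain_def
  proof (intro conjI ballI)
    show "?D \<subseteq> quot_minus J" using C_sub in_minus m by auto
  next
    fix x y assume x: "x \<in> ?D" and y: "y \<in> ?D"
    have cl: "\<And>c. c \<in> C \<Longrightarrow> quot_le J (quot_class J m) c \<or> quot_le J c (quot_class J m)"
    proof -
      fix c assume "c \<in> C"
      then obtain A where A: "A \<in> Crep" "c = quot_class J A" using C_rep by blast
      then show "quot_le J (quot_class J m) c \<or> quot_le J c (quot_class J m)"
        using cm le_cls m(1) Crep_borel by blast
    qed
    have mm: "quot_le J (quot_class J m) (quot_class J m)" using le_cls m(1) by simp
    show "quot_le J x y \<or> quot_le J y x"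
      using x y cl mm maxc unfolding is_maximal_chain_def is_chain_def by blast
  qed
  then have "?D = C" using maxc unfolding is_maximal_chain_def by blast
  then show ?thesis using m unfolding Crep_def by auto
qed

lemma lt_trans: "lt a b \<Longrightarrow> lt b c \<Longrightarrow> lt a c"
proof
  assume ab: "lt a b" and bc: "lt b c"
  show "a - c \<in> J" using ab bc trans by blast
  show "c - a \<notin> J"
  proof
    assume "c - a \<in> J"
    then have "b - a \<in> J" using bc trans by blast
    then show False using ab by blast
  qed
qed

lemma dense:
  assumes ab: "a \<in> borel_cantor" "b \<in> borel_cantor" "lt a b"
    and cm: "\<forall>c\<in>Crep. (c - a \<in> J \<or> a - c \<in> J) \<and> (c - b \<in> J \<or> b - c \<in> J)"
  shows "\<exists>c\<in>Crep. lt a c \<and> lt c b"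
proof (rule ccontr)
  assume nc: "\<not> ?thesis"
  have D: "b - a \<in> borel_cantor" "b - a \<notin> J" using ab by auto
  from atomless[OF D] obtain E where E: "E \<in> borel_cantor" "E \<subseteq> b - a" "E \<notin> J" "(b - a) - E \<notin> J"
    by blast
  define m where "m = a \<union> E"
  have mB: "m \<in> borel_cantor" using ab E unfolding m_def by auto
  have am: "lt a m"
  proof
    have "a - m = {}" unfolding m_def by auto
    then show "a - m \<in> J" by (simp only: empty)
    have "m - a = E" using E unfolding m_def by auto
    then show "m - a \<notin> J" using E by simp
  qed
  have mb: "lt m b"
  proof
    have "m - b = a - b" using E unfolding m_def by auto
    then show "m - b \<in> J" using ab by simp
    have "b - m = (b - a) - E" unfolding m_def by auto
    then show "b - m \<notin> J" using E by simp
  qed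
  have m1: "m \<notin> J"
  proof
    assume "m \<in> J"
    then have "E \<in> J" by (rule down) (simp add: m_def)
    with E show False by simp
  qed
  have m2: "UNIV - m \<notin> J"
  proof
    assume "UNIV - m \<in> J"
    then have "b - m \<in> J" by (rule down) auto
    with mb show False by simp
  qed
  have "\<forall>c\<in>Crep. m - c \<in> J \<or> c - m \<in> J"
  proof
    fix c assume c: "c \<in> Crep"
    show "m - c \<in> J \<or> c - m \<in> J"
    proof (cases "c - a \<in> J")
      case True
      then have "c - m \<in> J" by (rule down) (auto simp: m_def)
      then show ?thesis by simp
    next
      case False
      then have ac: "a - c \<in> J" using cm c by blast
      show ?thesis
      proof (cases "b - c \<in> J")
        case True
        have "m - c \<in> J" by (rule trans[of m b c]) (use mb True in auto)
        then show ?thesis by simp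
      next
        case False
        then have "c - b \<in> J" using cm c by blast
        then have "lt a c \<and> lt c b" using ac False \<open>c - a \<notin> J\<close> by blast
        then show ?thesis using nc c by blast
      qed
    qed
  qed
  then have "m \<in> Crep" using maximal mB m1 m2 by blast
  then show False using nc am mb by blast
qed

lemma dense_Crep: "a \<in> Crep \<Longrightarrow> b \<in> Crep \<Longrightarrow> lt a b \<Longrightarrow> \<exists>c\<in>Crep. lt a c \<and> lt c b"
proof -
  assume a: "a \<in> Crep" and b: "b \<in> Crep" and ab: "lt a b"
  have "\<forall>c\<in>Crep. (c - a \<in> J \<or> a - c \<in> J) \<and> (c - b \<in> J \<or> b - c \<in> J)"
    using Crep_cmp a b by blast
  then show ?thesis using dense[OF Crep_borel[OF a] Crep_borel[OF b] ab] by blast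
qed

lemma sup_in:
  assumes S: "S \<subseteq> Crep" and U: "U \<in> borel_cantor" "\<forall>A\<in>S. A - U \<in> J"
    "\<forall>B\<in>borel_cantor. (\<forall>A\<in>S. A - B \<in> J) \<longrightarrow> U - B \<in> J"
    and m: "m1 \<in> Crep" "m2 \<in> Crep" "m1 - U \<in> J" "U - m2 \<in> J"
  shows "U \<in> Crep"
proof (rule maximal[OF U(1)])
  show "U \<notin> J"
  proof
    assume "U \<in> J" then have "m1 \<in> J" using m(3) sub2[of m1 "m1 - U" U] by blast
    then show False using m(1) Crep_minus by blast
  qed
  show "UNIV - U \<notin> J"
  proof
    assume "UNIV - U \<in> J" then have "UNIV - m2 \<in> J" using m(4) sub2[of "UNIV - m2" "UNIV - U" "U - m2"] by blast
    then show False using m(2) Crep_minus by blast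
  qed
  show "\<forall>c\<in>Crep. U - c \<in> J \<or> c - U \<in> J"
  proof
    fix c assume c: "c \<in> Crep"
    show "U - c \<in> J \<or> c - U \<in> J"
    proof (cases "\<forall>A\<in>S. A - c \<in> J")
      case True then show ?thesis using U(3) c Crep_borel by blast
    next
      case False
      then obtain A where A: "A \<in> S" "A - c \<notin> J" by blast
      then have "c - A \<in> J" using Crep_cmp S c by blast
      then have "c - U \<in> J" using trans A U(2) by blast
      then show ?thesis by simp
    qed
  qed
qed

definition mid where "mid a b = (SOME c. c \<in> Crep \<and> lt a c \<and> lt c b)"

lemma mid: "a \<in> Crep \<Longrightarrow> b \<in> Crep \<Longrightarrow> lt a b \<Longrightarrow> mid a b \<in> Crep \<and> lt a (mid a b) \<and> lt (mid a b) b"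
  unfolding mid_def by (rule someI_ex) (use dense_Crep in blast)

lemma first_two: "\<exists>m1 m2. m1 \<in> Crep \<and> m2 \<in> Crep \<and> lt m1 m2"
proof -
  have "\<exists>c\<in>Crep. lt {} c \<and> lt c UNIV"
    by (rule dense) (use univ in auto)
  then obtain m1 where m1: "m1 \<in> Crep" "lt m1 UNIV" by blast
  have "\<exists>c\<in>Crep. lt m1 c \<and> lt c UNIV"
  proof (rule dense)
    show "\<forall>c\<in>Crep. (c - m1 \<in> J \<or> m1 - c \<in> J) \<and> (c - UNIV \<in> J \<or> UNIV - c \<in> J)"
      using Crep_cmp m1(1) by simp
  qed (use m1 Crep_borel in auto)
  then show ?thesis using m1 by blast
qed

definition m1 where "m1 = (SOME m1. \<exists>m2. m1 \<in> Crep \<and> m2 \<in> Crep \<and> lt m1 m2)"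
definition m2 where "m2 = (SOME m2. m1 \<in> Crep \<and> m2 \<in> Crep \<and> lt m1 m2)"

lemma m12: "m1 \<in> Crep \<and> m2 \<in> Crep \<and> lt m1 m2"
proof -
  have "\<exists>m2. m1 \<in> Crep \<and> m2 \<in> Crep \<and> lt m1 m2"
    unfolding m1_def by (rule someI_ex) (rule first_two)
  then show ?thesis unfolding m2_def by (rule someI_ex)
qed

primrec I :: "(nat \<Rightarrow> bool) \<Rightarrow> nat \<Rightarrow> (nat \<Rightarrow> bool) set \<times> (nat \<Rightarrow> bool) set" where
  "I x 0 = (m1, m2)"
| "I x (Suc n) = (if x n then (mid (mid (fst (I x n)) (snd (I x n))) (snd (I x n)), snd (I x n))
                   else (fst (I x n), mid (fst (I x n)) (snd (I x n))))"

lemma I_inv: "fst (I x n) \<in> Crep \<and> snd (I x n) \<in> Crep \<and> lt (fst (I x n)) (snd (I x n))"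
proof (induction n)
  case 0 then show ?case using m12 by simp
next
  case (Suc n)
  let ?a = "fst (I x n)" and ?b = "snd (I x n)"
  have c1: "mid ?a ?b \<in> Crep \<and> lt ?a (mid ?a ?b) \<and> lt (mid ?a ?b) ?b" using mid Suc by blast
  then have c2: "mid (mid ?a ?b) ?b \<in> Crep \<and> lt (mid ?a ?b) (mid (mid ?a ?b) ?b) \<and> lt (mid (mid ?a ?b) ?b) ?b"
    using mid Suc by blast
  show ?case using c1 c2 Suc by auto
qed

lemma I_step: "fst (I x n) - fst (I x (Suc n)) \<in> J \<and> snd (I x (Suc n)) - snd (I x n) \<in> J"
proof -
  let ?a = "fst (I x n)" and ?b = "snd (I x n)"
  have c1: "mid ?a ?b \<in> Crep \<and> lt ?a (mid ?a ?b) \<and> lt (mid ?a ?b) ?b" using mid I_inv by blast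
  then have c2: "mid (mid ?a ?b) ?b \<in> Crep \<and> lt (mid ?a ?b) (mid (mid ?a ?b) ?b) \<and> lt (mid (mid ?a ?b) ?b) ?b"
    using mid I_inv by blast
  have "?a - mid (mid ?a ?b) ?b \<in> J" using c1 c2 trans by blast
  then show ?thesis using c1 by auto
qed

lemma I_mono: "fst (I x n) - fst (I x (n + k)) \<in> J \<and> snd (I x (n + k)) - snd (I x n) \<in> J"
proof (induction k)
  case 0 then show ?case by simp
next
  case (Suc k)
  then show ?case using I_step[of x "n + k"] trans by auto
qed

lemma I_fs: "fst (I x n) - snd (I x k) \<in> J"
proof -
  have "fst (I x n) - fst (I x (n + k)) \<in> J" using I_mono by blast
  moreover have "fst (I x (n + k)) - snd (I x (n + k)) \<in> J" using I_inv by blast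
  moreover have "snd (I x (k + n)) - snd (I x k) \<in> J" using I_mono by blast
  ultimately show ?thesis using trans by (metis add.commute)
qed

definition f where "f x = (SOME U. U \<in> borel_cantor \<and> (\<forall>A\<in>range (\<lambda>n. fst (I x n)). A - U \<in> J) \<and>
     (\<forall>B\<in>borel_cantor. (\<forall>A\<in>range (\<lambda>n. fst (I x n)). A - B \<in> J) \<longrightarrow> U - B \<in> J))"

lemma f_prop: "f x \<in> borel_cantor \<and> (\<forall>A\<in>range (\<lambda>n. fst (I x n)). A - f x \<in> J) \<and>
     (\<forall>B\<in>borel_cantor. (\<forall>A\<in>range (\<lambda>n. fst (I x n)). A - B \<in> J) \<longrightarrow> f x - B \<in> J)"
  unfolding f_def
  by (rule someI_ex) (use supr[of "range (\<lambda>n. fst (I x n))"] I_inv Crep_borel in blast)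

lemma f_ge: "fst (I x n) - f x \<in> J"
  using f_prop by blast

lemma f_le: "f x - snd (I x k) \<in> J"
  using f_prop I_fs I_inv Crep_borel by blast

lemma f_Crep: "f x \<in> Crep"
proof (rule sup_in[of "range (\<lambda>n. fst (I x n))" _ m1 m2])
  show "m1 - f x \<in> J" using f_ge[of x 0] by simp
  show "f x - m2 \<in> J" using f_le[of x 0] by simp
qed (use f_prop I_inv m12 in auto)

lemma split_lemma:
  assumes e: "I x n = I y n" and xn: "\<not> x n" and yn: "y n"
  shows "f y - f x \<notin> J"
proof
  assume h: "f y - f x \<in> J"
  let ?a = "fst (I x n)" and ?b = "snd (I x n)"
  have c1: "mid ?a ?b \<in> Crep \<and> lt ?a (mid ?a ?b) \<and> lt (mid ?a ?b) ?b" using mid I_inv by blast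
  then have c2: "lt (mid ?a ?b) (mid (mid ?a ?b) ?b)"
    using mid I_inv by blast
  have "f x - mid ?a ?b \<in> J" using f_le[of x "Suc n"] xn by simp
  moreover have "mid (mid ?a ?b) ?b - f y \<in> J" using f_ge[of y "Suc n"] yn e by simp
  ultimately have "mid (mid ?a ?b) ?b - mid ?a ?b \<in> J" using h trans by blast
  then show False using c2 by blast
qed

lemma f_inj: "x \<noteq> y \<Longrightarrow> quot_class J (f x) \<noteq> quot_class J (f y)"
proof -
  assume "x \<noteq> y"
  then obtain n0 where "x n0 \<noteq> y n0" by auto
  define n where "n = (LEAST n. x n \<noteq> y n)"
  have xn: "x n \<noteq> y n" unfolding n_def by (rule LeastI) fact
  have lt: "\<And>k. k < n \<Longrightarrow> x k = y k" unfolding n_def using not_less_Least by blast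
  have eq: "k \<le> n \<Longrightarrow> I x k = I y k" for k
    by (induction k) (use lt in auto)
  have "I x n = I y n" using eq by simp
  then have "f y - f x \<notin> J \<or> f x - f y \<notin> J"
    using split_lemma[of x n y] split_lemma[of y n x] xn by (cases "x n") auto
  then show ?thesis using cls_eq f_prop by blast
qed

lemma lower: "(card_of (UNIV :: (nat \<Rightarrow> bool) set), card_of C) \<in> ordLeq"
proof -
  have "inj_on (\<lambda>x. quot_class J (f x)) UNIV" using f_inj by (meson inj_onI)
  moreover have "(\<lambda>x. quot_class J (f x)) ` UNIV \<subseteq> C" using f_Crep unfolding Crep_def by auto
  ultimately show ?thesis using card_of_ordLeq by blast
qed

lemma upper: "(card_of C, card_of (UNIV :: (nat \<Rightarrow> bool) set)) \<in> ordLeq"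
proof -
  obtain h :: "(nat\<Rightarrow>bool) set \<Rightarrow> nat \<Rightarrow> bool" where h: "\<forall>A\<in>borel_cantor. \<forall>B\<in>borel_cantor.
              (A - B \<in> J \<or> B - A \<in> J) \<longrightarrow> h A = h B \<longrightarrow> A - B \<in> J \<and> B - A \<in> J"
    using code by blast
  define rep where "rep c = (SOME A. A \<in> Crep \<and> c = quot_class J A)" for c
  have rep: "c \<in> C \<Longrightarrow> rep c \<in> Crep \<and> c = quot_class J (rep c)" for c
    unfolding rep_def by (rule someI_ex) (use C_rep in blast)
  have "inj_on (\<lambda>c. h (rep c)) C"
  proof (rule inj_onI)
    fix c d assume c: "c \<in> C" and d: "d \<in> C" and e: "h (rep c) = h (rep d)"
    have "rep c - rep d \<in> J \<and> rep d - rep c \<in> J"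
      using h rep[OF c] rep[OF d] Crep_cmp Crep_borel e by blast
    then show "c = d" using cls_eq rep[OF c] rep[OF d] Crep_borel by metis
  qed
  moreover have "(\<lambda>c. h (rep c)) ` C \<subseteq> (UNIV :: (nat \<Rightarrow> bool) set)" by simp
  ultimately show ?thesis using card_of_ordLeq by blast
qed

end

lemma qa_mc: assumes "qa J" shows "mc_equals (quot_minus J) (quot_le J) (UNIV :: (nat \<Rightarrow> bool) set)"
proof -
  obtain C where C: "is_maximal_chain (quot_minus J) (quot_le J) C" using maximal_chain_exists by blast
  interpret mchain J C using assms C by (simp add: mchain_def mchain_axioms_def)
  have ex: "\<exists>C. is_maximal_chain (quot_minus J) (quot_le J) C \<and> (card_of C, card_of (UNIV :: (nat \<Rightarrow> bool) set)) \<in> ordIso"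
    using C lower upper ordIso_iff_ordLeq by blast
  have all: "\<forall>C. is_maximal_chain (quot_minus J) (quot_le J) C \<longrightarrow> (card_of (UNIV :: (nat \<Rightarrow> bool) set), card_of C) \<in> ordLeq"
  proof (intro allI impI)
    fix D assume D: "is_maximal_chain (quot_minus J) (quot_le J) D"
    interpret d: mchain J D using assms D by (simp add: mchain_def mchain_axioms_def)
    show "(card_of (UNIV :: (nat \<Rightarrow> bool) set), card_of D) \<in> ordLeq" by (rule d.lower)
  qed
  show ?thesis unfolding mc_equals_def using ex all by blast
qed



abbreviation Bp where "Bp \<equiv> measure_pmf (bernoulli_pmf (1/2))"

lemma cm_prob: "prob_space cantor_measure"
  unfolding cantor_measure_def by (rule prob_space_PiM) (rule prob_space_measure_pmf)

interpretation cm: prob_space cantor_measure by (rule cm_prob)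

lemma space_cm[simp]: "space cantor_measure = UNIV"
  unfolding cantor_measure_def by (auto simp: space_PiM PiE_def extensional_def)

lemma cyl_eq: "cyl l = prod_emb UNIV (\<lambda>_. Bp) {..<length l} (Pi\<^sub>E {..<length l} (\<lambda>i. {l!i}))"
  unfolding cyl_def prod_emb_def by (auto simp: PiE_def extensional_def restrict_def space_PiM Pi_def)

lemma cyl_sets: "cyl l \<in> sets cantor_measure"
  unfolding cyl_eq cantor_measure_def by (rule sets_PiM_I) auto

lemma cyl_measure: "emeasure cantor_measure (cyl l) = ennreal ((1/2) ^ length l)"
proof -
  have "emeasure cantor_measure (cyl l) = (\<Prod>i\<in>{..<length l}. emeasure Bp {l!i})"
    unfolding cyl_eq cantor_measure_def by (rule emeasure_PiM_emb) (auto intro: prob_space_measure_pmf)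
  also have "\<dots> = (\<Prod>i\<in>{..<length l}. ennreal (1/2))"
    by (simp add: emeasure_pmf_single pmf_bernoulli_half)
  also have "\<dots> = ennreal (1/2) ^ length l"
    by (simp only: prod_constant card_lessThan)
  also have "\<dots> = ennreal ((1/2) ^ length l)"
    by (rule ennreal_power) simp
  finally show ?thesis .
qed

lemma open_sets: "openin cantor_top U \<Longrightarrow> U \<in> sets cantor_measure"
  apply (subst open_cyl_union, assumption)
  apply (rule sets.countable_UN')
  using cyl_sets by auto

lemma borel_sets: "borel_cantor \<subseteq> sets cantor_measure"
proof -
  have "sigma_sets (space cantor_measure) {U. openin cantor_top U} \<subseteq> sets cantor_measure"
    by (rule sets.sigma_sets_subset) (use open_sets in auto)
  then show ?thesis unfolding borel_cantor_def by simp
qed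

lemma null_iff: "X \<in> sets cantor_measure \<Longrightarrow> X \<in> null_ideal \<longleftrightarrow> cm.prob X = 0"
proof
  assume X: "X \<in> sets cantor_measure" and "X \<in> null_ideal"
  then obtain N where "N \<in> null_sets cantor_measure" "X \<subseteq> N" unfolding null_ideal_def by auto
  then have "X \<in> null_sets cantor_measure" using null_sets_subset X by blast
  then show "cm.prob X = 0" by (rule measure_eq_0_null_sets)
next
  assume X: "X \<in> sets cantor_measure" and "cm.prob X = 0"
  then have "X \<in> null_sets cantor_measure" by (simp add: null_sets_def cm.emeasure_eq_measure)
  then show "X \<in> null_ideal" unfolding null_ideal_def by auto
qed

lemma UNIV_sets[simp]: "UNIV \<in> sets cantor_measure"
  using sets.top[of cantor_measure] by simp

lemma null_cunion: "countable F \<Longrightarrow> F \<subseteq> null_ideal \<Longrightarrow> \<Union>F \<in> null_ideal"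
proof -
  assume F: "countable F" "F \<subseteq> null_ideal"
  then have "\<forall>A\<in>F. \<exists>N. N \<in> null_sets cantor_measure \<and> A \<subseteq> N" unfolding null_ideal_def by auto
  then obtain g where g: "\<forall>A\<in>F. g A \<in> null_sets cantor_measure \<and> A \<subseteq> g A" by metis
  have "\<Union>(g ` F) \<in> null_sets cantor_measure" by (rule null_sets_UN') (use F g in auto)
  moreover have "\<Union>F \<subseteq> \<Union>(g ` F)" using g by auto
  ultimately show ?thesis unfolding null_ideal_def by auto
qed

lemma cyl_prob: "cm.prob (cyl l) = (1/2) ^ length l"
proof -
  have "ennreal (cm.prob (cyl l)) = ennreal ((1/2) ^ length l)"
    using cyl_measure cm.emeasure_eq_measure by metis
  then show ?thesis by (subst (asm) ennreal_inj) auto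
qed

lemma null_single: "{x} \<in> null_ideal"
proof -
  define N where "N = (\<Inter>n. cyl (map x [0..<n]))"
  have NS: "N \<in> sets cantor_measure" unfolding N_def
    by (rule sets.countable_INT'') (auto simp: cyl_sets)
  have le: "cm.prob N \<le> (1/2) ^ n" for n
  proof -
    have "N \<subseteq> cyl (map x [0..<n])" unfolding N_def by auto
    then have "cm.prob N \<le> cm.prob (cyl (map x [0..<n]))"
      by (rule cm.finite_measure_mono) (rule cyl_sets)
    then show ?thesis using cyl_prob by simp
  qed
  have "cm.prob N = 0"
  proof (rule ccontr)
    assume "cm.prob N \<noteq> 0"
    then have "cm.prob N > 0" using measure_nonneg[of cantor_measure N] by linarith
    from real_arch_pow_inv[OF this, of "1/2"] obtain n where "(1/2::real) ^ n < cm.prob N" by auto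
    then show False using le[of n] by simp
  qed
  then have "N \<in> null_ideal" using null_iff NS by blast
  moreover have "x \<in> N" unfolding N_def cyl_def by auto
  ultimately show ?thesis unfolding null_ideal_def by auto
qed

lemma null_univ: "UNIV \<notin> null_ideal"
proof
  assume "UNIV \<in> null_ideal"
  then have "cm.prob UNIV = 0" using null_iff[of UNIV] by (metis space_cm sets.top)
  moreover have "cm.prob UNIV = 1" using cm.prob_space by simp
  ultimately show False by simp
qed

lemma null_supr:
  assumes S: "S \<subseteq> borel_cantor"
  shows "\<exists>U\<in>borel_cantor. (\<forall>A\<in>S. A - U \<in> null_ideal) \<and>
              (\<forall>B\<in>borel_cantor. (\<forall>A\<in>S. A - B \<in> null_ideal) \<longrightarrow> U - B \<in> null_ideal)"
proof -
  have SS: "S \<subseteq> sets cantor_measure" using S borel_sets by blast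
  define Fam where "Fam = {F. F \<subseteq> S \<and> countable F}"
  define vals where "vals = (\<lambda>F. cm.prob (\<Union>F)) ` Fam"
  define s where "s = Sup vals"
  have ne: "vals \<noteq> {}" unfolding vals_def Fam_def by auto
  have bdd: "bdd_above vals" unfolding vals_def by (rule bdd_aboveI[of _ 1]) (auto intro: cm.prob_le_1)
  have "\<exists>F\<in>Fam. s - inverse (real (Suc n)) < cm.prob (\<Union>F)" for n
  proof -
    have "s - inverse (real (Suc n)) < s" by simp
    then show ?thesis unfolding s_def using less_cSup_iff[OF ne bdd] unfolding vals_def by auto
  qed
  then obtain Fn where Fn: "\<And>n. Fn n \<in> Fam \<and> s - inverse (real (Suc n)) < cm.prob (\<Union>(Fn n))" by metis
  define G where "G = (\<Union>n. Fn n)"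
  have G: "G \<in> Fam" using Fn unfolding G_def Fam_def by auto
  define U where "U = \<Union>G"
  have UB: "U \<in> borel_cantor" unfolding U_def using G S unfolding Fam_def
    by (intro bsa.countable_Union) auto
  have US: "U \<in> sets cantor_measure" using UB borel_sets by blast
  have Uup: "cm.prob U \<le> s" unfolding s_def U_def vals_def using G bdd
    by (intro cSup_upper) (auto simp: vals_def)
  have Ulo: "s - inverse (real (Suc n)) < cm.prob U" for n
  proof -
    have "\<Union>(Fn n) \<subseteq> U" unfolding U_def G_def by auto
    then have "cm.prob (\<Union>(Fn n)) \<le> cm.prob U" using US by (rule cm.finite_measure_mono)
    then show ?thesis using Fn[of n] by linarith
  qed
  have Us: "cm.prob U = s"
  proof (rule ccontr)
    assume "cm.prob U \<noteq> s"
    then have "0 < s - cm.prob U" using Uup by linarith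
    from reals_Archimedean[OF this] obtain n where "inverse (real (Suc n)) < s - cm.prob U" by auto
    then show False using Ulo[of n] by linarith
  qed
  have part1: "A - U \<in> null_ideal" if A: "A \<in> S" for A
  proof -
    have AS: "A \<in> sets cantor_measure" using A SS by blast
    have "insert A G \<in> Fam" using G A unfolding Fam_def by auto
    then have "cm.prob (\<Union>(insert A G)) \<in> vals" unfolding vals_def by (rule imageI)
    then have "cm.prob (\<Union>(insert A G)) \<le> s" unfolding s_def using bdd
      by (intro cSup_upper)
    moreover have "\<Union>(insert A G) = U \<union> A" unfolding U_def by auto
    moreover have "cm.prob (U \<union> A) = cm.prob U + cm.prob (A - U)"
      using cm.finite_measure_Union'[OF US AS] .
    ultimately have "cm.prob (A - U) \<le> 0" using Us by simp
    then have "cm.prob (A - U) = 0" using measure_nonneg[of cantor_measure "A - U"] by linarith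
    then show ?thesis using null_iff AS US by blast
  qed
  have part2: "U - B \<in> null_ideal" if B: "B \<in> borel_cantor" "\<forall>A\<in>S. A - B \<in> null_ideal" for B
  proof -
    have "U - B = \<Union>((\<lambda>A. A - B) ` G)" unfolding U_def by auto
    moreover have "\<Union>((\<lambda>A. A - B) ` G) \<in> null_ideal"
      by (rule null_cunion) (use G B in \<open>auto simp: Fam_def\<close>)
    ultimately show ?thesis by simp
  qed
  show ?thesis using UB part1 part2 by blast
qed

lemma null_code: "\<exists>h::(nat\<Rightarrow>bool) set \<Rightarrow> nat \<Rightarrow> bool. \<forall>A\<in>borel_cantor. \<forall>B\<in>borel_cantor.
              (A - B \<in> null_ideal \<or> B - A \<in> null_ideal) \<longrightarrow> h A = h B \<longrightarrow> A - B \<in> null_ideal \<and> B - A \<in> null_ideal"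
proof (intro exI ballI impI)
  fix A B assume A: "A \<in> borel_cantor" and B: "B \<in> borel_cantor"
    and cmp: "A - B \<in> null_ideal \<or> B - A \<in> null_ideal"
    and h: "(\<lambda>n. real_of_rat (from_nat n) < cm.prob A) = (\<lambda>n. real_of_rat (from_nat n) < cm.prob B)"
  have AS: "A \<in> sets cantor_measure" and BS: "B \<in> sets cantor_measure" using A B borel_sets by auto
  have eq: "cm.prob A = cm.prob B"
  proof (rule ccontr)
    assume "cm.prob A \<noteq> cm.prob B"
    then consider "cm.prob A < cm.prob B" | "cm.prob B < cm.prob A" by linarith
    then show False
    proof cases
      case 1
      then obtain q where q: "cm.prob A < real_of_rat q" "real_of_rat q < cm.prob B" using of_rat_dense by blast
      have "(real_of_rat (from_nat (to_nat q)) < cm.prob A) = (real_of_rat (from_nat (to_nat q)) < cm.prob B)"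
        using fun_cong[OF h, of "to_nat q"] .
      then show False using q by simp
    next
      case 2
      then obtain q where q: "cm.prob B < real_of_rat q" "real_of_rat q < cm.prob A" using of_rat_dense by blast
      have "(real_of_rat (from_nat (to_nat q)) < cm.prob A) = (real_of_rat (from_nat (to_nat q)) < cm.prob B)"
        using fun_cong[OF h, of "to_nat q"] .
      then show False using q by simp
    qed
  qed
  have "cm.prob (A \<union> B) = cm.prob A + cm.prob (B - A)" using cm.finite_measure_Union'[OF AS BS] .
  moreover have "cm.prob (B \<union> A) = cm.prob B + cm.prob (A - B)" using cm.finite_measure_Union'[OF BS AS] .
  moreover have "A \<union> B = B \<union> A" by auto
  ultimately have e2: "cm.prob (B - A) = cm.prob (A - B)" using eq by simp
  have d1: "A - B \<in> sets cantor_measure" and d2: "B - A \<in> sets cantor_measure" using AS BS by auto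
  show "A - B \<in> null_ideal \<and> B - A \<in> null_ideal"
    using cmp null_iff[OF d1] null_iff[OF d2] e2 by auto
qed

lemma qa_null: "qa null_ideal"
  apply unfold_locales
       apply (auto simp: null_ideal_def)[1]
      apply (erule (1) null_cunion)
     apply (rule null_single)
    apply (rule null_univ)
   apply (erule null_supr)
  apply (rule null_code)
  done



lemma cantor_compact: "compact_space cantor_top"
  unfolding cantor_top_def compact_space_product_topology
  by (auto simp: compact_space_discrete_topology)

lemma cantor_Hausdorff: "Hausdorff_space cantor_top"
  unfolding cantor_top_def Hausdorff_space_product_topology by simp

lemma cantor_baire:
  assumes "countable G" "\<And>T. T \<in> G \<Longrightarrow> closedin cantor_top T \<and> cantor_top interior_of T = {}"
  shows "cantor_top interior_of \<Union>G = {}"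
  using Baire_category_alt[OF _ assms] cantor_compact cantor_Hausdorff
    compact_imp_locally_compact_space compact_Hausdorff_imp_regular_space by blast

lemma open_meager_empty:
  assumes U: "openin cantor_top U" "U \<in> meager_ideal"
  shows "U = {}"
proof -
  obtain F where F: "countable F" "\<forall>N\<in>F. nowhere_dense N" "U \<subseteq> \<Union>F"
    using U(2) unfolding meager_ideal_def by auto
  let ?G = "(\<lambda>N. cantor_top closure_of N) ` F"
  have "cantor_top interior_of \<Union>?G = {}"
    by (rule cantor_baire) (use F in \<open>auto simp: nowhere_dense_def closedin_closure_of\<close>)
  moreover have "U \<subseteq> \<Union>?G"
  proof
    fix x assume "x \<in> U"
    then obtain N where N: "N \<in> F" "x \<in> N" using F(3) by blast
    have "N \<subseteq> cantor_top closure_of N" by (rule closure_of_subset) simp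
    then show "x \<in> \<Union>?G" using N by blast
  qed
  then have "U \<subseteq> cantor_top interior_of \<Union>?G" by (rule interior_of_maximal) (rule U(1))
  ultimately show ?thesis by simp
qed

lemma meager_down: assumes "A \<in> meager_ideal" "B \<subseteq> A" shows "B \<in> meager_ideal"
proof -
  obtain F where F: "countable F" "\<forall>N\<in>F. nowhere_dense N" "A \<subseteq> \<Union>F"
    using assms(1) unfolding meager_ideal_def by blast
  have "B \<subseteq> \<Union>F" using F(3) assms(2) by blast
  then show ?thesis unfolding meager_ideal_def
    by (intro CollectI exI[of _ F] conjI F(1,2))
qed

lemma meager_empty: "{} \<in> meager_ideal"
  unfolding meager_ideal_def by (intro CollectI exI[of _ "{}"]) auto

lemma meager_cunion: "countable F \<Longrightarrow> F \<subseteq> meager_ideal \<Longrightarrow> \<Union>F \<in> meager_ideal"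
proof -
  assume F: "countable F" "F \<subseteq> meager_ideal"
  then have "\<forall>A\<in>F. \<exists>G. countable G \<and> (\<forall>N\<in>G. nowhere_dense N) \<and> A \<subseteq> \<Union>G"
    unfolding meager_ideal_def by auto
  then obtain g where g: "\<forall>A\<in>F. countable (g A) \<and> (\<forall>N\<in>g A. nowhere_dense N) \<and> A \<subseteq> \<Union>(g A)"
    by metis
  have c1: "countable (\<Union>(g ` F))" using F g by auto
  have c2: "\<forall>N\<in>\<Union>(g ` F). nowhere_dense N" using g by auto
  have c3: "\<Union>F \<subseteq> \<Union>(\<Union>(g ` F))" using g by blast
  show ?thesis unfolding meager_ideal_def
    by (rule CollectI, rule exI[of _ "\<Union>(g ` F)"]) (intro conjI c1 c2 c3)
qed

lemma singleton_not_open: "\<not> openin cantor_top {x}"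
proof
  assume "openin cantor_top {x}"
  then have "openin (product_topology (\<lambda>_. discrete_topology (UNIV::bool set)) UNIV) {x}"
    by (simp add: cantor_top_def)
  then have "\<forall>z\<in>{x}. \<exists>U. finite {i \<in> UNIV. U i \<noteq> topspace (discrete_topology (UNIV::bool set))} \<and>
                 (\<forall>i \<in> UNIV. openin (discrete_topology UNIV) (U i)) \<and> z \<in> Pi\<^sub>E UNIV U \<and> Pi\<^sub>E UNIV U \<subseteq> {x}"
    by (rule openin_product_topology_alt[THEN iffD1])
  from bspec[OF this singletonI] obtain V where
     PV: "finite {i \<in> UNIV. V i \<noteq> topspace (discrete_topology (UNIV::bool set))} \<and>
                 (\<forall>i \<in> UNIV. openin (discrete_topology UNIV) (V i)) \<and> x \<in> Pi\<^sub>E UNIV V \<and> Pi\<^sub>E UNIV V \<subseteq> {x}"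
    by (rule exE)
  have V: "finite {i. V i \<noteq> UNIV}" "x \<in> Pi\<^sub>E UNIV V" "Pi\<^sub>E UNIV V \<subseteq> {x}"
    using conjunct1[OF PV] conjunct1[OF conjunct2[OF conjunct2[OF PV]]] conjunct2[OF conjunct2[OF conjunct2[OF PV]]]
    by simp_all
  obtain N where N: "{i. V i \<noteq> UNIV} \<subseteq> {..<N}" using finite_nat_bounded[OF V(1)] by blast
  define y where "y = x(N := \<not> x N)"
  have "y \<in> Pi\<^sub>E UNIV V"
  proof (simp add: PiE_def Pi_def, intro allI)
    fix i show "y i \<in> V i"
    proof (cases "i = N")
      case True then have "V i = UNIV" using N by auto
      then show ?thesis by simp
    next
      case False then show ?thesis using V(2) unfolding y_def by auto
    qed
  qed
  then have "y = x" using V(3) by blast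
  moreover have "y N \<noteq> x N" unfolding y_def by simp
  ultimately show False by simp
qed

lemma meager_single: "{x} \<in> meager_ideal"
proof -
  have cl: "cantor_top closure_of {x} = {x}"
    by (rule closure_of_closedin) (rule closedin_Hausdorff_singleton[OF cantor_Hausdorff], simp)
  have "cantor_top interior_of {x} = {}"
  proof (rule ccontr)
    assume "cantor_top interior_of {x} \<noteq> {}"
    then have "cantor_top interior_of {x} = {x}" using interior_of_subset[of cantor_top "{x}"] by blast
    then show False using openin_interior_of[of cantor_top "{x}"] singleton_not_open by simp
  qed
  then have "nowhere_dense {x}" unfolding nowhere_dense_def cl .
  then show ?thesis unfolding meager_ideal_def by (intro CollectI exI[of _ "{{x}}"]) auto
qed

lemma meager_univ: "UNIV \<notin> meager_ideal"
  using open_meager_empty[of UNIV] openin_topspace[of cantor_top] by auto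

lemma boundary_nd:
  assumes U: "openin cantor_top U"
  shows "cantor_top closure_of U - U \<in> meager_ideal"
proof -
  let ?D = "cantor_top closure_of U - U"
  have cD: "closedin cantor_top ?D"
    using closedin_diff[OF closedin_closure_of U] by simp
  have "cantor_top interior_of ?D = {}"
  proof (rule ccontr)
    assume "cantor_top interior_of ?D \<noteq> {}"
    then obtain z where z: "z \<in> cantor_top interior_of ?D" by blast
    let ?O = "cantor_top interior_of ?D"
    have "z \<in> ?D" using interior_of_subset[of cantor_top ?D] z by blast
    then have zc: "z \<in> cantor_top closure_of U" by simp
    have "\<forall>T. z \<in> T \<and> openin cantor_top T \<longrightarrow> (\<exists>y. y \<in> U \<and> y \<in> T)"
      using zc unfolding in_closure_of by simp
    then have "\<exists>y. y \<in> U \<and> y \<in> ?O" using z openin_interior_of[of cantor_top ?D] by simp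
    then obtain y where "y \<in> U" "y \<in> ?O" by blast
    then show False using interior_of_subset[of cantor_top ?D] by blast
  qed
  then have "nowhere_dense ?D" unfolding nowhere_dense_def closure_of_closedin[OF cD] .
  then show ?thesis unfolding meager_ideal_def by (intro CollectI exI[of _ "{?D}"]) auto
qed

lemma meager_Un2: "A \<in> meager_ideal \<Longrightarrow> B \<in> meager_ideal \<Longrightarrow> A \<union> B \<in> meager_ideal"
  using meager_cunion[of "{A,B}"] by auto

lemma baire_property:
  assumes "A \<in> borel_cantor"
  shows "\<exists>U. openin cantor_top U \<and> (A - U) \<union> (U - A) \<in> meager_ideal"
  using assms unfolding borel_cantor_def
proof (induction rule: sigma_sets.induct)
  case (Basic a)
  then show ?case by (intro exI[of _ a]) (simp add: meager_empty)
next
  case Empty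
  then show ?case by (intro exI[of _ "{}"]) (simp add: meager_empty)
next
  case (Compl a)
  then obtain U where U: "openin cantor_top U" "(a - U) \<union> (U - a) \<in> meager_ideal" by blast
  let ?V = "UNIV - cantor_top closure_of U"
  have o: "openin cantor_top ?V"
    using openin_diff[OF openin_topspace closedin_closure_of, of cantor_top U] by simp
  have cs: "U \<subseteq> cantor_top closure_of U" by (rule closure_of_subset) simp
  have sub: "((UNIV - a) - ?V) \<union> (?V - (UNIV - a)) \<subseteq> ((a - U) \<union> (U - a)) \<union> (cantor_top closure_of U - U)"
    using cs by blast
  have m: "((a - U) \<union> (U - a)) \<union> (cantor_top closure_of U - U) \<in> meager_ideal"
    by (rule meager_Un2[OF U(2) boundary_nd[OF U(1)]])
  have "((UNIV - a) - ?V) \<union> (?V - (UNIV - a)) \<in> meager_ideal" by (rule meager_down[OF m sub])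
  then show ?case using o by blast
next
  case (Union A)
  then have "\<forall>i. \<exists>U. openin cantor_top U \<and> (A i - U) \<union> (U - A i) \<in> meager_ideal" by blast
  then obtain U where U: "\<And>i. openin cantor_top (U i) \<and> (A i - U i) \<union> (U i - A i) \<in> meager_ideal"
    by metis
  have o: "openin cantor_top (\<Union>i. U i)" using U by (intro openin_Union) auto
  have m: "(\<Union>((\<lambda>i. (A i - U i) \<union> (U i - A i)) ` UNIV)) \<in> meager_ideal"
    by (rule meager_cunion) (use U in auto)
  have sub: "((\<Union>i. A i) - (\<Union>i. U i)) \<union> ((\<Union>i. U i) - (\<Union>i. A i)) \<subseteq> \<Union>((\<lambda>i. (A i - U i) \<union> (U i - A i)) ` UNIV)"
    by blast
  have "((\<Union>i. A i) - (\<Union>i. U i)) \<union> ((\<Union>i. U i) - (\<Union>i. A i)) \<in> meager_ideal" by (rule meager_down[OF m sub])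
  then show ?case using o by blast
qed

lemma meager_supr:
  assumes S: "S \<subseteq> borel_cantor"
  shows "\<exists>U\<in>borel_cantor. (\<forall>A\<in>S. A - U \<in> meager_ideal) \<and>
              (\<forall>B\<in>borel_cantor. (\<forall>A\<in>S. A - B \<in> meager_ideal) \<longrightarrow> U - B \<in> meager_ideal)"
proof -
  have "\<forall>A\<in>S. \<exists>U. openin cantor_top U \<and> (A - U) \<union> (U - A) \<in> meager_ideal"
    using S baire_property by blast
  then obtain R where R: "\<And>A. A \<in> S \<Longrightarrow> openin cantor_top (R A) \<and> (A - R A) \<union> (R A - A) \<in> meager_ideal"
    by metis
  define V where "V = \<Union>(R ` S)"
  have Vo: "openin cantor_top V" unfolding V_def using R by (intro openin_Union) auto
  have VB: "V \<in> borel_cantor" by (rule borel_open[OF Vo])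
  have p1: "A - V \<in> meager_ideal" if A: "A \<in> S" for A
  proof -
    have "A - V \<subseteq> (A - R A) \<union> (R A - A)" unfolding V_def using A by blast
    then show ?thesis using R[OF A] meager_down by blast
  qed
  have p2: "V - B \<in> meager_ideal" if B: "B \<in> borel_cantor" "\<forall>A\<in>S. A - B \<in> meager_ideal" for B
  proof -
    obtain W where W: "openin cantor_top W" "(B - W) \<union> (W - B) \<in> meager_ideal"
      using baire_property[OF B(1)] by blast
    have "R A \<subseteq> cantor_top closure_of W" if A: "A \<in> S" for A
    proof -
      let ?O = "R A - cantor_top closure_of W"
      have o: "openin cantor_top ?O" using openin_diff[OF _ closedin_closure_of] R[OF A] by blast
      have sub: "?O \<subseteq> ((A - R A) \<union> (R A - A)) \<union> (A - B) \<union> ((B - W) \<union> (W - B))"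
        using closure_of_subset[of W cantor_top] by auto
      have m: "((A - R A) \<union> (R A - A)) \<union> (A - B) \<union> ((B - W) \<union> (W - B)) \<in> meager_ideal"
        by (intro meager_Un2 R[OF A, THEN conjunct2] W(2)) (use B A in blast)
      have "?O = {}" by (rule open_meager_empty[OF o meager_down[OF m sub]])
      then show ?thesis by blast
    qed
    then have "V \<subseteq> cantor_top closure_of W" unfolding V_def by blast
    then have sub: "V - B \<subseteq> (cantor_top closure_of W - W) \<union> ((B - W) \<union> (W - B))" by blast
    have "(cantor_top closure_of W - W) \<union> ((B - W) \<union> (W - B)) \<in> meager_ideal"
      by (rule meager_Un2[OF boundary_nd[OF W(1)] W(2)])
    then show ?thesis by (rule meager_down[OF _ sub])
  qed
  show ?thesis using VB p1 p2 by blast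
qed

definition mrep where "mrep A = (SOME U. openin cantor_top U \<and> (A - U) \<union> (U - A) \<in> meager_ideal)"

lemma mrep: "A \<in> borel_cantor \<Longrightarrow> openin cantor_top (mrep A) \<and> (A - mrep A) \<union> (mrep A - A) \<in> meager_ideal"
  unfolding mrep_def by (rule someI_ex) (rule baire_property)

lemma meager_code: "\<exists>h::(nat\<Rightarrow>bool) set \<Rightarrow> nat \<Rightarrow> bool. \<forall>A\<in>borel_cantor. \<forall>B\<in>borel_cantor.
      (A - B \<in> meager_ideal \<or> B - A \<in> meager_ideal) \<longrightarrow> h A = h B \<longrightarrow> A - B \<in> meager_ideal \<and> B - A \<in> meager_ideal"
proof (intro exI ballI impI)
  fix A B assume A: "A \<in> borel_cantor" and B: "B \<in> borel_cantor"
    and h: "(\<lambda>n. cyl (from_nat n) \<subseteq> mrep A) = (\<lambda>n. cyl (from_nat n) \<subseteq> mrep B)"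
  have "cyl l \<subseteq> mrep A \<longleftrightarrow> cyl l \<subseteq> mrep B" for l
    using fun_cong[OF h, of "to_nat l"] by simp
  then have "{l. cyl l \<subseteq> mrep A} = {l. cyl l \<subseteq> mrep B}" by blast
  then have eq: "mrep A = mrep B"
    using open_cyl_union[OF mrep[OF A, THEN conjunct1]] open_cyl_union[OF mrep[OF B, THEN conjunct1]] by simp
  have mA: "(A - mrep A) \<union> (mrep A - A) \<in> meager_ideal" using mrep[OF A] by blast
  have mB: "(B - mrep A) \<union> (mrep A - B) \<in> meager_ideal" using mrep[OF B] eq by simp
  have m: "((A - mrep A) \<union> (mrep A - A)) \<union> ((B - mrep A) \<union> (mrep A - B)) \<in> meager_ideal"
    by (rule meager_Un2[OF mA mB])
  show "A - B \<in> meager_ideal \<and> B - A \<in> meager_ideal"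
  proof
    show "A - B \<in> meager_ideal" by (rule meager_down[OF m]) blast
    show "B - A \<in> meager_ideal" by (rule meager_down[OF m]) blast
  qed
qed

lemma qa_meager: "qa meager_ideal"
  apply unfold_locales
       apply (erule (1) meager_down)
      apply (erule (1) meager_cunion)
     apply (rule meager_single)
    apply (rule meager_univ)
   apply (erule meager_supr)
  apply (rule meager_code)
  done

theorem mainTheorem8:
  shows "mc_equals (quot_minus null_ideal) (quot_le null_ideal) (UNIV :: (nat \<Rightarrow> bool) set)
       \<and> mc_equals (quot_minus meager_ideal) (quot_le meager_ideal) (UNIV :: (nat \<Rightarrow> bool) set)"
  using qa_mc[OF qa_null] qa_mc[OF qa_meager] by blast


end
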